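(* Let $A\in\mathbb{R}^{n\times n}$, $B\in\mathbb{R}^{n\times m}$, $N\geq1$ an integer, $\Omega=\{x\in\mathbb{R}^n: Hx\leq h\}$ with $H\in\mathbb{R}^{n_h\times n}$, $X=\{y\in\mathbb{R}^n: Fy\leq f\}$ with $F\in\mathbb{R}^{n_f\times n}$, and $U=\{v\in\mathbb{R}^m: Gv\leq g\}$ with $G\in\mathbb{R}^{n_g\times m}$. Suppose $0\in\Omega$, $0\in X$, $0\in U$. For $k\geq1$ let $Q_k^x(\Omega,U,X)$ be the set of $x\in X$ for which there exist inputs $w_0,\dots,w_{k-1}\in U$ such that the trajectory $x_0=x$, $x_{j+1}=Ax_j+Bw_j$ satisfies $x_j\in X$ for all $j=1,\dots,k$ and $x_k\in\Omega$. Let $\bar{Q}^x_N(\Omega,U,X)=\mathrm{co}\big(\bigcup_{k=1}^N Q^x_k(\Omega,U,X)\big)$. Set $\bar n=n+Nm$ and $$\bar G=\begin{bmatrix} HA^N & HB & HAB & \cdots & HA^{N-1}B\\ 0 & G & 0 & \cdots & 0\\ 0 & 0 & G & \cdots & 0\\ \vdots & & & \ddots & \vdots\\ 0 & 0 & 0 & \cdots & G\\ FA^N & FB & FAB & \cdots & FA^{N-1}B\\ FA^{N-1} & 0 & FB & \cdots & FA^{N-2}B\\ \vdots & & & & \vdots\\ FA & 0 & 0 & \cdots & FB\\ F & 0 & 0 & \cdots & 0 \end{bmatrix},\qquad \bar g=\begin{bmatrix}h\\ g\\ \vdots\\ g\\ f\\ \vdots\\ f\end{bmatrix},\qquad \bar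 H=\begin{bmatrix}H & 0&\cdots&0\end{bmatrix}\in\mathbb{R}^{n_h\times\bar n}.$$ Here the columns of $\bar G$ are split into blocks of widths $n,m,\dots,m$ (one state block followed by $N$ input blocks indexed $i=1,\dots,N$); the $G$-rows consist of $N$ block rows, the $i$-th having $G$ in input block $i$; the $F$-rows consist of $N+1$ block rows, namely for $j=N,N-1,\dots,1$ a block row with $FA^j$ in the state block and, in input block $i$, $FA^{i-1-(N-j)}B$ if $i\geq N-j+1$ and $0$ otherwise, followed by the block row $[F\ 0\ \cdots\ 0]$. Correspondingly $\bar g$ consists of $h$, then $g$ repeated $N$ times, then $f$ repeated $N+1$ times, and $n_{\bar g}=n_h+Nn_g+(N+1)n_f$ is the number of rows of $\bar G$. If there exist a nonnegative (entrywise) matrix $T\in\mathbb{R}^{n_{\bar g}\times n_h}$ and $M\in\mathbb{R}^{\bar n\times\bar n}$ such that $$T\bar H=\bar G M,\qquad Th\leq\bar g,\qquad \begin{bmatrix}I&0&\cdots&0\end{bmatrix}=\begin{bmatrix}I&0&\cdots&0\end{bmatrix}M$$ (with $\begin{bmatrix}I&0&\cdots&0\end{bmatrix}\in\mathbb{R}^{n\times\bar n}$), then $\bar{Q}^x_N(\Omega,U,X)$ is a control invariant set for $x^+=Ax+Bu$ with input set $U$, and it is contained in $X$.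
   Context: A set $C\subseteq\mathbb{R}^n$ is control invariant for $x^+=Ax+Bu$ with input constraint $u\in U$ if for every $x\in C$ there exists $u\in U$ with $Ax+Bu\in C$. Vector inequalities are componentwise; $\mathrm{co}$ denotes convex hull. *)

theory Defs
  imports "HOL-Analysis.Analysis"
begin

primrec mpow :: "real^'n^'n \<Rightarrow> nat \<Rightarrow> real^'n^'n" where
  "mpow A 0 = mat 1"
| "mpow A (Suc k) = A ** mpow A k"

definition control_invariant ::
  "real^'n^'n \<Rightarrow> real^'m^'n \<Rightarrow> (real^'m) set \<Rightarrow> (real^'n) set \<Rightarrow> bool" where
  "control_invariant A B U C \<longleftrightarrow> (\<forall>x\<in>C. \<exists>u\<in>U. A *v x + B *v u \<in> C)"

primrec traj :: "real^'n^'n \<Rightarrow> real^'m^'n \<Rightarrow> real^'n \<Rightarrow> (nat \<Rightarrow> real^'m) \<Rightarrow> nat \<Rightarrow> real^'n" where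
  "traj A B x w 0 = x"
| "traj A B x w (Suc j) = A *v traj A B x w j + B *v w j"

definition Qk ::
  "real^'n^'n \<Rightarrow> real^'m^'n \<Rightarrow> (real^'n) set \<Rightarrow> (real^'m) set \<Rightarrow> (real^'n) set \<Rightarrow> nat \<Rightarrow> (real^'n) set" where
  "Qk A B Omega U X k = {x \<in> X. \<exists>w. (\<forall>j<k. w j \<in> U) \<and> (\<forall>j\<in>{1..k}. traj A B x w j \<in> X)
                                      \<and> traj A B x w k \<in> Omega}"

definition Qbar ::
  "real^'n^'n \<Rightarrow> real^'m^'n \<Rightarrow> (real^'n) set \<Rightarrow> (real^'m) set \<Rightarrow> (real^'n) set \<Rightarrow> nat \<Rightarrow> (real^'n) set" where
  "Qbar A B Omega U X N = convex hull (\<Union>k\<in>{1..N}. Qk A B Omega U X k)"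

(* Column indices of the lifted space R^{n + N m}:
   SC c = state coordinate c; IC i a = coordinate a of input block i+1 (0 <= i < N). *)
datatype ('n, 'm) cidx = SC 'n | IC nat 'm

definition Cols :: "nat \<Rightarrow> ('n, 'm) cidx set" where
  "Cols N = range SC \<union> {IC i a | i a. i < N}"

(* Row indices of Gbar: HR r = H-row r; GR i r = row r of the G-block row for input block i+1 (i < N);
   FR j r = row r of the F-block row whose state block is F A^j (0 <= j <= N). *)
datatype ('h, 'g, 'f) ridx = HR 'h | GR nat 'g | FR nat 'f

definition Rows :: "nat \<Rightarrow> ('h, 'g, 'f) ridx set" where
  "Rows N = range HR \<union> {GR i r | i r. i < N} \<union> {FR j r | j r. j \<le> N}"

definition Gbar ::
  "nat \<Rightarrow> real^'n^'n \<Rightarrow> real^'m^'n \<Rightarrow> real^'n^'h \<Rightarrow> real^'n^'f \<Rightarrow> real^'m^'g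
   \<Rightarrow> ('h, 'g, 'f) ridx \<Rightarrow> ('n, 'm) cidx \<Rightarrow> real" where
  "Gbar N A B H F G \<rho> \<kappa> =
     (case \<rho> of
        HR r \<Rightarrow> (case \<kappa> of SC c \<Rightarrow> (H ** mpow A N) $ r $ c
                           | IC i a \<Rightarrow> (H ** mpow A i ** B) $ r $ a)
      | GR i r \<Rightarrow> (case \<kappa> of SC c \<Rightarrow> 0
                             | IC i' a \<Rightarrow> (if i' = i then G $ r $ a else 0))
      | FR j r \<Rightarrow> (case \<kappa> of SC c \<Rightarrow> (F ** mpow A j) $ r $ c
                             | IC i a \<Rightarrow> (if N - j \<le> i then (F ** mpow A (i - (N - j)) ** B) $ r $ a
                                           else 0)))"

definition gbar ::
  "real^'h \<Rightarrow> real^'g \<Rightarrow> real^'f \<Rightarrow> ('h, 'g, 'f) ridx \<Rightarrow> real" where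
  "gbar h g f \<rho> = (case \<rho> of HR r \<Rightarrow> h $ r | GR i r \<Rightarrow> g $ r | FR j r \<Rightarrow> f $ r)"

definition Hbar :: "real^'n^'h \<Rightarrow> 'h \<Rightarrow> ('n, 'm) cidx \<Rightarrow> real" where
  "Hbar H r \<kappa> = (case \<kappa> of SC c \<Rightarrow> H $ r $ c | IC i a \<Rightarrow> 0)"

definition Ibar :: "'n \<Rightarrow> ('n, 'm) cidx \<Rightarrow> real" where
  "Ibar c \<kappa> = (if \<kappa> = SC c then 1 else 0)"

end

theory Submission
  imports Defs
begin

lemma mv_sum: "(X::real^'a^'b) *v sum f S = (\<Sum>i\<in>S. X *v f i)"
proof (cases "finite S")
  case True then show ?thesis
    by (induction S rule: finite_induct) (auto simp: matrix_vector_right_distrib)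
qed simp

lemma mv_comp: "(\<Sum>c\<in>UNIV. (X::real^'a^'b) $ r $ c * v $ c) = (X *v v) $ r"
  by (simp add: matrix_vector_mult_def)

lemma sum_Cols:
  fixes \<phi> :: "('n::finite,'m::finite) cidx \<Rightarrow> real"
  shows "finite (Cols N :: ('n,'m) cidx set)"
    and "sum \<phi> (Cols N) = (\<Sum>c\<in>UNIV. \<phi> (SC c)) + (\<Sum>i<N. \<Sum>a\<in>UNIV. \<phi> (IC i a))"
proof -
  have e: "(Cols N :: ('n,'m) cidx set) = range SC \<union> (\<lambda>(i,a). IC i a) ` ({..<N} \<times> UNIV)"
    by (auto simp: Cols_def)
  show "finite (Cols N :: ('n,'m) cidx set)" unfolding e by auto
  have "sum \<phi> (Cols N) = sum \<phi> (range SC) + sum \<phi> ((\<lambda>(i,a). IC i a) ` ({..<N} \<times> UNIV))"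
    unfolding e by (rule sum.union_disjoint) auto
  also have "sum \<phi> (range SC) = (\<Sum>c\<in>UNIV. \<phi> (SC c))"
    by (subst sum.reindex) (auto simp: inj_def)
  also have "sum \<phi> ((\<lambda>(i,a). IC i a) ` ({..<N} \<times> UNIV)) = (\<Sum>(i,a)\<in>{..<N}\<times>UNIV. \<phi> (IC i a))"
    by (subst sum.reindex) (auto simp: inj_on_def case_prod_unfold)
  also have "\<dots> = (\<Sum>i<N. \<Sum>a\<in>UNIV. \<phi> (IC i a))"
    by (simp add: sum.cartesian_product)
  finally show "sum \<phi> (Cols N) = (\<Sum>c\<in>UNIV. \<phi> (SC c)) + (\<Sum>i<N. \<Sum>a\<in>UNIV. \<phi> (IC i a))" .
qed

definition st :: "(('n::finite,'m) cidx \<Rightarrow> real) \<Rightarrow> real^'n" where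
  "st y = (\<chi> c. y (SC c))"
definition inp :: "(('n,'m::finite) cidx \<Rightarrow> real) \<Rightarrow> nat \<Rightarrow> real^'m" where
  "inp y i = (\<chi> a. y (IC i a))"

definition PP :: "nat \<Rightarrow> real^'n^'n \<Rightarrow> real^'m^'n \<Rightarrow> (('n::finite,'m::finite) cidx \<Rightarrow> real) \<Rightarrow> nat \<Rightarrow> real^'n" where
  "PP N A B y j = mpow A j *v st y +
     (\<Sum>i<N. if N - j \<le> i then mpow A (i - (N - j)) *v (B *v inp y i) else 0)"

lemma row_FR:
  "(\<Sum>\<kappa>\<in>Cols N. Gbar N A B H F G (FR j r) \<kappa> * y \<kappa>) = (F *v PP N A B y j) $ r"
proof -
  have 1: "(\<Sum>c\<in>UNIV. (F ** mpow A j) $ r $ c * y (SC c)) = (F *v (mpow A j *v st y)) $ r"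
    using mv_comp[of "F ** mpow A j" r "st y"] by (simp add: st_def matrix_vector_mul_assoc)
  have 2: "(\<Sum>a\<in>UNIV. (if N - j \<le> i then (F ** mpow A (i - (N - j)) ** B) $ r $ a else 0) * y (IC i a))
     = (F *v (if N - j \<le> i then mpow A (i - (N - j)) *v (B *v inp y i) else 0)) $ r" for i
    using mv_comp[of "F ** mpow A (i - (N - j)) ** B" r "inp y i"]
    by (simp add: inp_def matrix_vector_mul_assoc matrix_mul_assoc)
  show ?thesis
    unfolding sum_Cols(2) Gbar_def PP_def
    by (simp add: 1 2 matrix_vector_right_distrib mv_sum)
qed

lemma row_HR:
  "(\<Sum>\<kappa>\<in>Cols N. Gbar N A B H F G (HR r) \<kappa> * y \<kappa>) = (H *v PP N A B y N) $ r"
proof -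
  have 1: "(\<Sum>c\<in>UNIV. (H ** mpow A N) $ r $ c * y (SC c)) = (H *v (mpow A N *v st y)) $ r"
    using mv_comp[of "H ** mpow A N" r "st y"] by (simp add: st_def matrix_vector_mul_assoc)
  have 2: "(\<Sum>a\<in>UNIV. (H ** mpow A i ** B) $ r $ a * y (IC i a))
     = (H *v (mpow A i *v (B *v inp y i))) $ r" for i
    using mv_comp[of "H ** mpow A i ** B" r "inp y i"]
    by (simp add: inp_def matrix_vector_mul_assoc matrix_mul_assoc)
  show ?thesis
    unfolding sum_Cols(2) Gbar_def PP_def
    by (simp add: 1 2 matrix_vector_right_distrib mv_sum)
qed

lemma row_GR:
  assumes "i < N"
  shows "(\<Sum>\<kappa>\<in>Cols N. Gbar N A B H F G (GR i r) \<kappa> * y \<kappa>) = (G *v inp y i) $ r"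
proof -
  have "(\<Sum>i'<N. \<Sum>a\<in>UNIV. (if i' = i then G $ r $ a else 0) * y (IC i' a))
      = (\<Sum>i'<N. if i' = i then (\<Sum>a\<in>UNIV. G $ r $ a * y (IC i a)) else 0)"
    by (rule sum.cong) auto
  also have "\<dots> = (\<Sum>a\<in>UNIV. G $ r $ a * y (IC i a))" using assms by simp
  also have "\<dots> = (G *v inp y i) $ r" using mv_comp[of G r "inp y i"] by (simp add: inp_def)
  finally show ?thesis unfolding sum_Cols(2) Gbar_def by simp
qed

lemma traj_PP:
  assumes "j \<le> N"
  shows "traj A B (st y) (\<lambda>l. inp y (N - 1 - l)) j = PP N A B y j"
  using assms
proof (induction j)
  case 0
  then show ?case by (simp add: PP_def)
next
  case (Suc j)
  have pt: "(if N - Suc j \<le> i then mpow A (i - (N - Suc j)) *v (B *v inp y i) else 0)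
     = A *v (if N - j \<le> i then mpow A (i - (N - j)) *v (B *v inp y i) else 0)
       + (if i = N - Suc j then B *v inp y i else 0)" if "i < N" for i
  proof -
    consider "N - j \<le> i" | "i = N - Suc j" | "i < N - Suc j" using Suc.prems by linarith
    then show ?thesis
    proof cases
      case 1
      then have "i - (N - Suc j) = Suc (i - (N - j))" using Suc.prems by linarith
      moreover have "i \<noteq> N - Suc j" "N - Suc j \<le> i" using 1 Suc.prems by linarith+
      ultimately show ?thesis using 1
        by (simp add: matrix_vector_mul_assoc matrix_mul_assoc)
    next
      case 2 then show ?thesis using Suc.prems by simp
    qed simp
  qed
  have "(\<Sum>i<N. if N - Suc j \<le> i then mpow A (i - (N - Suc j)) *v (B *v inp y i) else 0)
     = (\<Sum>i<N. A *v (if N - j \<le> i then mpow A (i - (N - j)) *v (B *v inp y i) else 0)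
       + (if i = N - Suc j then B *v inp y i else 0))"
    by (rule sum.cong) (auto simp: pt)
  also have "\<dots> = A *v (\<Sum>i<N. if N - j \<le> i then mpow A (i - (N - j)) *v (B *v inp y i) else 0)
       + B *v inp y (N - Suc j)"
    using Suc.prems by (simp add: sum.distrib mv_sum)
  finally have e: "(\<Sum>i<N. if N - Suc j \<le> i then mpow A (i - (N - Suc j)) *v (B *v inp y i) else 0)
     = A *v (\<Sum>i<N. if N - j \<le> i then mpow A (i - (N - j)) *v (B *v inp y i) else 0)
       + B *v inp y (N - Suc j)" .
  show ?case
    using Suc by (simp add: PP_def e matrix_vector_right_distrib matrix_vector_mul_assoc algebra_simps)
qed

lemma traj_shift:
  "traj A B (traj A B x w 1) (\<lambda>j. w (Suc j)) j = traj A B x w (Suc j)"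
  by (induction j) auto

lemma convex_poly_aux:
  fixes x y :: "real^'a" and G :: "real^'a^'b"
  assumes x: "\<forall>i. (G *v x) $ i \<le> g $ i" and y: "\<forall>i. (G *v y) $ i \<le> g $ i"
    and uv: "0 \<le> u" "0 \<le> v" "u + v = 1"
  shows "(G *v (u *\<^sub>R x + v *\<^sub>R y)) $ i \<le> g $ i"
proof -
  have "(G *v (u *\<^sub>R x + v *\<^sub>R y)) $ i = u * (G *v x) $ i + v * (G *v y) $ i"
    by (simp add: matrix_vector_right_distrib matrix_vector_mult_scaleR)
  also have "\<dots> \<le> u * g $ i + v * g $ i"
    using x y uv by (intro add_mono mult_left_mono) auto
  also have "\<dots> = g $ i" using uv by (simp flip: distrib_right)
  finally show ?thesis .
qed

lemma convex_poly: "convex {v. \<forall>i. ((G::real^'a^'b) *v v) $ i \<le> g $ i}"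
  unfolding convex_def using convex_poly_aux by blast

theorem theorem2:
  fixes A :: "real^'n^'n" and B :: "real^'m^'n"
    and H :: "real^'n^'h" and h :: "real^'h"
    and F :: "real^'n^'f" and f :: "real^'f"
    and G :: "real^'m^'g" and g :: "real^'g"
    and N :: nat
    and T :: "('h, 'g, 'f) ridx \<Rightarrow> 'h \<Rightarrow> real"
    and M :: "('n, 'm) cidx \<Rightarrow> ('n, 'm) cidx \<Rightarrow> real"
  defines "Omega \<equiv> {x. \<forall>i. (H *v x) $ i \<le> h $ i}"
    and "X \<equiv> {y. \<forall>i. (F *v y) $ i \<le> f $ i}"
    and "U \<equiv> {v. \<forall>i. (G *v v) $ i \<le> g $ i}"
  assumes N: "N \<ge> 1"
    and O0: "0 \<in> Omega" and X0: "0 \<in> X" and U0: "0 \<in> U"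
    and Tnonneg: "\<forall>\<rho>\<in>Rows N. \<forall>r. T \<rho> r \<ge> 0"
    and THGM: "\<forall>\<rho>\<in>Rows N. \<forall>\<kappa>\<in>Cols N.
                 (\<Sum>r\<in>UNIV. T \<rho> r * Hbar H r \<kappa>) = (\<Sum>\<kappa>'\<in>Cols N. Gbar N A B H F G \<rho> \<kappa>' * M \<kappa>' \<kappa>)"
    and Th: "\<forall>\<rho>\<in>Rows N. (\<Sum>r\<in>UNIV. T \<rho> r * h $ r) \<le> gbar h g f \<rho>"
    and IM: "\<forall>c. \<forall>\<kappa>\<in>Cols N. Ibar c \<kappa> = (\<Sum>\<kappa>'\<in>Cols N. Ibar c \<kappa>' * M \<kappa>' \<kappa>)"
  shows "control_invariant A B U (Qbar A B Omega U X N) \<and> Qbar A B Omega U X N \<subseteq> X"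
proof -
  have finC: "finite (Cols N :: ('n,'m) cidx set)" by (rule sum_Cols(1))
  have SCC: "(SC c :: ('n,'m) cidx) \<in> Cols N" for c by (simp add: Cols_def)
  have convU: "convex U" unfolding U_def by (rule convex_poly)
  have convX: "convex X" unfolding X_def by (rule convex_poly)
  have OmQ: "Omega \<subseteq> Qk A B Omega U X N"
  proof
    fix x assume x: "x \<in> Omega"
    define y where "y \<kappa>' = (\<Sum>c\<in>UNIV. M \<kappa>' (SC c) * x $ c)" for \<kappa>'
    have Mst: "M (SC c) (SC c') = (if c' = c then 1 else 0)" for c c'
    proof -
      have "Ibar c (SC c' :: ('n,'m) cidx) = (\<Sum>\<kappa>'\<in>Cols N. Ibar c \<kappa>' * M \<kappa>' (SC c'))"
        by (rule IM[rule_format, OF SCC])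
      also have "\<dots> = (\<Sum>\<kappa>'\<in>Cols N. if \<kappa>' = SC c then M \<kappa>' (SC c') else 0)"
        by (rule sum.cong) (auto simp: Ibar_def)
      also have "\<dots> = M (SC c) (SC c')" using finC SCC by simp
      finally show ?thesis by (simp add: Ibar_def)
    qed
    have d: "(\<Sum>c\<in>UNIV. (if c = i then 1 else 0) * x $ c) = x $ i" for i
    proof -
      have "(\<Sum>c\<in>UNIV. (if c = i then 1 else 0) * x $ c) = (\<Sum>c\<in>UNIV. if c = i then x $ c else 0)"
        by (rule sum.cong) auto
      then show ?thesis by simp
    qed
    have sty: "st y = x"
      by (simp add: vec_eq_iff st_def y_def Mst d)
    have key: "(\<Sum>\<kappa>\<in>Cols N. Gbar N A B H F G \<rho> \<kappa> * y \<kappa>) \<le> gbar h g f \<rho>" if \<rho>: "\<rho> \<in> Rows N" for \<rho>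
    proof -
      have "(\<Sum>\<kappa>\<in>Cols N. Gbar N A B H F G \<rho> \<kappa> * y \<kappa>)
          = (\<Sum>\<kappa>\<in>Cols N. \<Sum>c\<in>UNIV. Gbar N A B H F G \<rho> \<kappa> * M \<kappa> (SC c) * x $ c)"
        by (simp add: y_def sum_distrib_left mult.assoc)
      also have "\<dots> = (\<Sum>c\<in>UNIV. (\<Sum>\<kappa>\<in>Cols N. Gbar N A B H F G \<rho> \<kappa> * M \<kappa> (SC c)) * x $ c)"
        by (subst sum.swap) (simp add: sum_distrib_right)
      also have "\<dots> = (\<Sum>c\<in>UNIV. (\<Sum>r\<in>UNIV. T \<rho> r * Hbar H r (SC c :: ('n,'m) cidx)) * x $ c)"
        using THGM[rule_format, OF \<rho> SCC] by simp
      also have "\<dots> = (\<Sum>r\<in>UNIV. T \<rho> r * (H *v x) $ r)"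
      proof -
        have "(\<Sum>c\<in>UNIV. (\<Sum>r\<in>UNIV. T \<rho> r * Hbar H r (SC c :: ('n,'m) cidx)) * x $ c)
            = (\<Sum>c\<in>UNIV. \<Sum>r\<in>UNIV. T \<rho> r * (H $ r $ c * x $ c))"
          by (simp add: Hbar_def sum_distrib_right mult.assoc)
        also have "\<dots> = (\<Sum>r\<in>UNIV. \<Sum>c\<in>UNIV. T \<rho> r * (H $ r $ c * x $ c))"
          by (rule sum.swap)
        also have "\<dots> = (\<Sum>r\<in>UNIV. T \<rho> r * (H *v x) $ r)"
          by (simp add: matrix_vector_mult_def sum_distrib_left)
        finally show ?thesis .
      qed
      also have "\<dots> \<le> (\<Sum>r\<in>UNIV. T \<rho> r * h $ r)"
        using x Tnonneg \<rho> unfolding Omega_def by (intro sum_mono mult_left_mono) auto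
      also have "\<dots> \<le> gbar h g f \<rho>" using Th \<rho> by blast
      finally show ?thesis .
    qed
    define w where "w = (\<lambda>l. inp y (N - 1 - l))"
    have tr: "traj A B x w j = PP N A B y j" if "j \<le> N" for j
      using traj_PP[OF that, of A B y] sty by (simp add: w_def)
    have trX: "traj A B x w j \<in> X" if "j \<le> N" for j
    proof -
      have "(F *v traj A B x w j) $ r \<le> f $ r" for r
        using key[of "FR j r"] that row_FR[of N A B H F G j r y] tr[OF that]
        by (simp add: Rows_def gbar_def)
      then show ?thesis by (simp add: X_def)
    qed
    have wU: "w l \<in> U" if "l < N" for l
    proof -
      have "(G *v w l) $ r \<le> g $ r" for r
        using key[of "GR (N - 1 - l) r"] that row_GR[of "N - 1 - l" N A B H F G r y]
        by (simp add: Rows_def gbar_def w_def)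
      then show ?thesis by (simp add: U_def)
    qed
    have trO: "traj A B x w N \<in> Omega"
    proof -
      have "(H *v traj A B x w N) $ r \<le> h $ r" for r
        using key[of "HR r"] row_HR[of N A B H F G r y] tr[of N]
        by (simp add: Rows_def gbar_def)
      then show ?thesis by (simp add: Omega_def)
    qed
    have "x \<in> X" using trX[of 0] by simp
    then show "x \<in> Qk A B Omega U X N"
      unfolding Qk_def using wU trX trO by (auto intro!: exI[of _ w])
  qed
  let ?S = "\<Union>k\<in>{1..N}. Qk A B Omega U X k"
  have stepS: "\<exists>u\<in>U. A *v s + B *v u \<in> ?S" if sS: "s \<in> ?S" for s
  proof -
    obtain k where k: "k \<in> {1..N}" "s \<in> Qk A B Omega U X k" using sS by blast
    then obtain w where w: "\<forall>j<k. w j \<in> U" "\<forall>j\<in>{1..k}. traj A B s w j \<in> X"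
      "traj A B s w k \<in> Omega" "s \<in> X"
      unfolding Qk_def by blast
    have u: "w 0 \<in> U" using w(1) k(1) by auto
    show ?thesis
    proof (cases "k = 1")
      case True
      then have "traj A B s w 1 \<in> Omega" using w(3) by simp
      then have "A *v s + B *v w 0 \<in> Omega" by simp
      then have "A *v s + B *v w 0 \<in> Qk A B Omega U X N" using OmQ by blast
      moreover have "N \<in> {1..N}" using N by simp
      ultimately have "A *v s + B *v w 0 \<in> ?S" by blast
      then show ?thesis using u by blast
    next
      case False
      then have k2: "k \<ge> 2" using k(1) by auto
      let ?x = "traj A B s w 1"
      let ?w = "\<lambda>j. w (Suc j)"
      have "(1::nat) \<in> {1..k}" using k2 by simp
      then have "?x \<in> X" using w(2) by blast
      moreover have "\<forall>j<k-1. ?w j \<in> U" using w(1) by auto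
      moreover have "\<forall>j\<in>{1..k-1}. traj A B ?x ?w j \<in> X"
      proof
        fix j assume j: "j \<in> {1..k-1}"
        then have "Suc j \<in> {1..k}" by auto
        then have "traj A B s w (Suc j) \<in> X" using w(2) by blast
        then show "traj A B ?x ?w j \<in> X" by (simp only: traj_shift)
      qed
      moreover have "traj A B ?x ?w (k-1) \<in> Omega"
      proof -
        have "Suc (k-1) = k" using k2 by simp
        then show ?thesis using w(3) by (simp only: traj_shift)
      qed
      ultimately have "?x \<in> X \<and> ((\<forall>j<k-1. ?w j \<in> U) \<and> (\<forall>j\<in>{1..k-1}. traj A B ?x ?w j \<in> X)
            \<and> traj A B ?x ?w (k-1) \<in> Omega)" by blast
      then have "?x \<in> Qk A B Omega U X (k-1)"
        unfolding Qk_def mem_Collect_eq by (elim conjE) (intro conjI exI[of _ ?w])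
      moreover have "k - 1 \<in> {1..N}" using k(1) k2 by auto
      ultimately have "traj A B s w 1 \<in> ?S" by blast
      then have "A *v s + B *v w 0 \<in> ?S" by simp
      then show ?thesis using u by blast
    qed
  qed
  define C where "C = {x \<in> convex hull ?S. \<exists>u\<in>U. A *v x + B *v u \<in> convex hull ?S}"
  have SC: "?S \<subseteq> C"
  proof
    fix s assume s: "s \<in> ?S"
    obtain u where u: "u \<in> U" "A *v s + B *v u \<in> ?S" using stepS[OF s] by blast
    have "A *v s + B *v u \<in> convex hull ?S" using u(2) by (rule hull_inc)
    moreover have "s \<in> convex hull ?S" using s by (rule hull_inc)
    ultimately show "s \<in> C" unfolding C_def using u(1) by blast
  qed
  have convC: "convex C"
    unfolding convex_def
  proof (intro ballI allI impI)
    fix x1 x2 a b assume x1: "x1 \<in> C" and x2: "x2 \<in> C" and ab: "0 \<le> (a::real)" "0 \<le> b" "a + b = 1"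
    obtain u1 where u1: "u1 \<in> U" "A *v x1 + B *v u1 \<in> convex hull ?S" "x1 \<in> convex hull ?S"
      using x1 unfolding C_def by blast
    obtain u2 where u2: "u2 \<in> U" "A *v x2 + B *v u2 \<in> convex hull ?S" "x2 \<in> convex hull ?S"
      using x2 unfolding C_def by blast
    have "a *\<^sub>R u1 + b *\<^sub>R u2 \<in> U" using convexD[OF convU u1(1) u2(1) ab] .
    moreover have e: "A *v (a *\<^sub>R x1 + b *\<^sub>R x2) + B *v (a *\<^sub>R u1 + b *\<^sub>R u2)
        = a *\<^sub>R (A *v x1 + B *v u1) + b *\<^sub>R (A *v x2 + B *v u2)"
      by (simp add: matrix_vector_right_distrib matrix_vector_mult_scaleR scaleR_right_distrib add_ac)
    moreover have "a *\<^sub>R (A *v x1 + B *v u1) + b *\<^sub>R (A *v x2 + B *v u2) \<in> convex hull ?S"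
      using convexD[OF convex_convex_hull u1(2) u2(2) ab] .
    moreover have "a *\<^sub>R x1 + b *\<^sub>R x2 \<in> convex hull ?S"
      using convexD[OF convex_convex_hull u1(3) u2(3) ab] .
    ultimately show "a *\<^sub>R x1 + b *\<^sub>R x2 \<in> C" unfolding C_def
      by (metis (mono_tags, lifting) mem_Collect_eq)
  qed
  have "convex hull ?S \<subseteq> C" using SC convC by (rule hull_minimal[where S=convex])
  then have ci: "control_invariant A B U (Qbar A B Omega U X N)"
    unfolding control_invariant_def Qbar_def
  proof (intro ballI)
    fix x assume "convex hull ?S \<subseteq> C" "x \<in> convex hull ?S"
    then have "x \<in> C" by (rule subsetD)
    then show "\<exists>u\<in>U. A *v x + B *v u \<in> convex hull ?S" unfolding C_def by blast
  qed
  have "?S \<subseteq> X" unfolding Qk_def by blast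
  then have "Qbar A B Omega U X N \<subseteq> X"
    unfolding Qbar_def using convX by (rule hull_minimal[where S=convex])
  with ci show ?thesis by blast
qed

end
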